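(* The monomials $X_1^rX_2^s(X_2^* )^t(X_1^* )^u(Q')^v$, $r,s,t,u,v\in\mathbb Z_{\ge0}$, where $Q'=Q-X_1X_1^*-X_2X_2^*$, form a $\mathbb C$-linear basis of $\mathcal X$.
   Context: Fix $0<q<1$. $\mathcal X$ is the unital complex $*$-algebra generated by $X_1,X_1^*,X_2,X_2^*,Q$ with involution $(X_i)^*=X_i^*$, $Q^*=Q$, subject to the relations $X_1X_2=qX_2X_1$, $X_1^*X_2=qX_2X_1^*$, $X_2^*X_2=q^2X_2X_2^*+(1-q^2)Q$, $X_1^*X_1=q^2X_1X_1^*+(1-q^2)(Q-X_2X_2^* )$, $Q$ central, together with the $*$-images of these relations. *)

theory Defs
  imports Complex_Main "HOL-Library.Function_Algebras"
begin

text \<open>The free unital complex algebra on the generators X1, X1*, X2, X2*, Q is modelled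
as finitely supported functions from words (lists of generators) to complex numbers;
the algebra X is its quotient by the two-sided ideal generated by the defining
relations together with their *-images.  A basis of the quotient is expressed as:
the given elements span modulo the ideal, and no nontrivial finite linear
combination of them lies in the ideal.\<close>

datatype gen = X1 | X1s | X2 | X2s | Qg

fun gstar :: "gen \<Rightarrow> gen" where
  "gstar X1 = X1s" | "gstar X1s = X1" | "gstar X2 = X2s" | "gstar X2s = X2" | "gstar Qg = Qg"

type_synonym elt = "gen list \<Rightarrow> complex"

definition wd :: "gen list \<Rightarrow> elt" where
  "wd u = (\<lambda>w. if w = u then 1 else 0)"

definition fscale :: "complex \<Rightarrow> elt \<Rightarrow> elt" where
  "fscale c f = (\<lambda>w. c * f w)"

definition fmul :: "elt \<Rightarrow> elt \<Rightarrow> elt" where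
  "fmul f g = (\<lambda>w. \<Sum>n\<in>{0..length w}. f (take n w) * g (drop n w))"

definition fstar :: "elt \<Rightarrow> elt" where
  "fstar f = (\<lambda>w. cnj (f (rev (map gstar w))))"

definition fpow :: "elt \<Rightarrow> nat \<Rightarrow> elt" where
  "fpow f n = (fmul f ^^ n) (wd [])"

definition base_rels :: "real \<Rightarrow> elt set" where
  "base_rels q =
     {wd [X1, X2] - fscale (of_real q) (wd [X2, X1]),
      wd [X1s, X2] - fscale (of_real q) (wd [X2, X1s]),
      wd [X2s, X2] - fscale (of_real (q^2)) (wd [X2, X2s]) - fscale (of_real (1 - q^2)) (wd [Qg]),
      wd [X1s, X1] - fscale (of_real (q^2)) (wd [X1, X1s])
        - fscale (of_real (1 - q^2)) (wd [Qg] - wd [X2, X2s])}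
   \<union> {wd [Qg, g] - wd [g, Qg] | g. True}"

definition rels :: "real \<Rightarrow> elt set" where
  "rels q = base_rels q \<union> fstar ` base_rels q"

inductive_set gen_ideal :: "elt set \<Rightarrow> elt set" for R where
  zero: "0 \<in> gen_ideal R"
| step: "r \<in> R \<Longrightarrow> p \<in> gen_ideal R \<Longrightarrow>
           p + fscale c (fmul (fmul (wd u) r) (wd v)) \<in> gen_ideal R"

definition Qprime :: elt where
  "Qprime = wd [Qg] - wd [X1, X1s] - wd [X2, X2s]"

definition monomial :: "nat \<times> nat \<times> nat \<times> nat \<times> nat \<Rightarrow> elt" where
  "monomial k = (case k of (r, s, t, u, v) \<Rightarrow>
     fmul (wd (replicate r X1 @ replicate s X2 @ replicate t X2s @ replicate u X1s))
          (fpow Qprime v))"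

end

theory Submission
  imports Defs "HOL-Library.Poly_Mapping"
begin
instantiation list :: (type) monoid_add
begin
definition zero_list_def: "0 = []"
definition plus_list_def: "xs + ys = xs @ ys"
instance by standard (auto simp: zero_list_def plus_list_def)
end


type_synonym P = "gen list \<Rightarrow>\<^sub>0 complex"

abbreviation lk :: "('a \<Rightarrow>\<^sub>0 'b::zero) \<Rightarrow> 'a \<Rightarrow> 'b" where "lk \<equiv> Poly_Mapping.lookup"

lemma pm_induct:
  fixes x :: "'a \<Rightarrow>\<^sub>0 'b::monoid_add"
  assumes "Q 0" and "\<And>x l c. Q x \<Longrightarrow> Q (x + Poly_Mapping.single l c)"
  shows "Q x"
proof (induction x rule: update_induct)
  case const then show ?case using assms(1) .
next
  case (update f a b)
  have "Poly_Mapping.update a b f = f + Poly_Mapping.single a b"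
    apply (rule poly_mapping_eqI)
    using update(1) by (auto simp: lookup_update lookup_add lookup_single when_def in_keys_iff)
  then show ?case using assms(2)[OF update(3)] by simp
qed

definition sc :: "complex \<Rightarrow> P" where "sc c = Poly_Mapping.single [] c"
definition gn :: "gen \<Rightarrow> P" where "gn g = Poly_Mapping.single [g] 1"

lemma single_mult_list: "Poly_Mapping.single l c * Poly_Mapping.single m d = (Poly_Mapping.single (l @ m) (c * d) :: P)"
  by (simp add: mult_single plus_list_def)

lemma sc_single: "sc c * Poly_Mapping.single l d = Poly_Mapping.single l (c * d)"
  "Poly_Mapping.single l d * sc c = Poly_Mapping.single l (c * d)"
  by (simp_all add: sc_def single_mult_list mult.commute)

lemma sc_central: "sc c * x = x * sc c"
  by (induction x rule: pm_induct) (simp_all add: distrib_left distrib_right sc_single)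

lemma sc_mult: "sc a * sc b = sc (a * b)" by (simp add: sc_def single_mult_list)
lemma sc_add: "sc a + sc b = sc (a + b)" by (simp add: sc_def single_add)
lemma sc_diff: "sc a - sc b = sc (a - b)" by (simp add: sc_def single_diff)
lemma sc_one: "sc 1 = 1" by (simp add: sc_def zero_list_def[symmetric])
lemma sc_zero: "sc 0 = 0" by (simp add: sc_def)
lemma sc_comm2: "x * (sc c * y) = sc c * (x * y)"
  by (metis mult.assoc sc_central)
lemma sc_assoc2: "sc a * (sc b * y) = sc (a*b) * y"
  by (metis mult.assoc sc_mult)

lemma fmul_wd_aux:
  assumes "n \<le> length w"
  shows "(take n w = a \<and> drop n w = b) \<longleftrightarrow> (n = length a \<and> w = a @ b)"
proof
  assume h: "take n w = a \<and> drop n w = b"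
  then have "w = a @ b" by (metis append_take_drop_id)
  moreover have "n = length a" using h assms by auto
  ultimately show "n = length a \<and> w = a @ b" by simp
next
  assume "n = length a \<and> w = a @ b"
  then show "take n w = a \<and> drop n w = b" by simp
qed

lemma fmul_wd: "fmul (wd a) (wd b) = wd (a @ b)"
proof (rule ext)
  fix w
  have "\<And>n. n \<in> {0..length w} \<Longrightarrow> (wd a (take n w) * wd b (drop n w)) = (if n = length a then wd (a@b) w else 0)"
  proof -
    fix n assume "n \<in> {0..length w}"
    then have "n \<le> length w" by simp
    from fmul_wd_aux[OF this, of a b] show "(wd a (take n w) * wd b (drop n w)) = (if n = length a then wd (a@b) w else 0)"
      unfolding wd_def by (simp only: if_distrib mult_1_left mult_zero_left split: if_split) blast
  qed
  then have "fmul (wd a) (wd b) w = (\<Sum>n\<in>{0..length w}. if n = length a then wd (a@b) w else 0)"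
    unfolding fmul_def by (rule sum.cong[OF refl])
  also have "\<dots> = wd (a@b) w"
    by (simp add: wd_def)
  finally show "fmul (wd a) (wd b) w = wd (a @ b) w" .
qed

lemma fmul_add_left: "fmul (f + g) h = fmul f h + fmul g h"
  by (rule ext) (simp add: fmul_def distrib_right sum.distrib)
lemma fmul_add_right: "fmul h (f + g) = fmul h f + fmul h g"
  by (rule ext) (simp add: fmul_def distrib_left sum.distrib)
lemma fmul_zero_left: "fmul 0 h = 0" by (rule ext) (simp add: fmul_def)
lemma fmul_zero_right: "fmul h 0 = 0" by (rule ext) (simp add: fmul_def)
lemma fmul_scale_left: "fmul (fscale c f) g = fscale c (fmul f g)"
  by (rule ext) (simp add: fmul_def fscale_def sum_distrib_left mult.assoc)
lemma fmul_scale_right: "fmul f (fscale c g) = fscale c (fmul f g)"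
  by (rule ext) (simp add: fmul_def fscale_def sum_distrib_left mult.left_commute)

lemma lookup_single_wd: "lk (Poly_Mapping.single l c) = fscale c (wd l)"
  by (rule ext) (auto simp: fscale_def wd_def lookup_single_not_eq)

lemma lookup_zero_fun[simp]: "lk 0 = 0" by (rule ext) simp
lemma lk_add: "lk (x + y) = lk x + lk y" by (rule ext) (simp add: lookup_add)
lemma lk_diff: "lk (x - y) = lk x - lk (y::'a \<Rightarrow>\<^sub>0 'b::ab_group_add)" by (rule ext) (simp add: lookup_minus)

lemma lookup_mult_fmul: "lk ((x::P) * y) = fmul (lk x) (lk y)"
proof (induction x rule: pm_induct)
  case 1 then show ?case by (rule ext) (simp add: fmul_def)
next
  case (2 x l c)
  have "lk (Poly_Mapping.single l c * y) = fmul (lk (Poly_Mapping.single l c)) (lk y)"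
  proof (induction y rule: pm_induct)
    case 1 then show ?case by (rule ext) (simp add: fmul_def)
  next
    case (2 y m d)
    have "lk (Poly_Mapping.single l c * (y + Poly_Mapping.single m d)) =
      fscale c (fmul (wd l) (lk y)) + fscale (c*d) (wd (l@m))"
      by (simp only: distrib_left lk_add 2 single_mult_list lookup_single_wd fmul_scale_left)
    also have "\<dots> = fmul (lk (Poly_Mapping.single l c)) (lk (y + Poly_Mapping.single m d))"
      by (simp only: lk_add lookup_single_wd fmul_add_right fmul_scale_left fmul_scale_right fmul_wd)
         (rule ext, simp add: fscale_def)
    finally show ?case .
  qed
  then show ?case using 2 by (simp only: distrib_right lk_add fmul_add_left)
qed

lemma fscale_sum: "fscale c (f + g) = fscale c f + fscale c g"
  by (rule ext) (simp add: fscale_def distrib_left)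

lemma fmul_wd_nil: "fmul (wd []) f = (f::elt)"
proof (rule ext)
  fix w
  have "fmul (wd []) f w = (\<Sum>n=0..length w. if n=0 then f w else 0)"
    unfolding fmul_def wd_def by (rule sum.cong) auto
  then show "fmul (wd []) f w = f w" by simp
qed

lemma fmul_wd_nil2: "fmul f (wd []) = (f::elt)"
proof (rule ext)
  fix w
  have "fmul f (wd []) w = (\<Sum>n=0..length w. if n=length w then f w else 0)"
    unfolding fmul_def wd_def by (rule sum.cong) auto
  then show "fmul f (wd []) w = f w" by simp
qed

lemma lookup_sc_mult: "lk (sc c * x) = fscale c (lk x)"
  by (simp add: lookup_mult_fmul sc_def lookup_single_wd fmul_scale_left fmul_wd_nil)
definition fsupp :: "elt \<Rightarrow> bool" where "fsupp f \<longleftrightarrow> finite {w. f w \<noteq> 0}"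

lemma fsupp_wd: "fsupp (wd l)" unfolding fsupp_def wd_def
  by (rule finite_subset[of _ "{l}"]) auto
lemma fsupp_add: "fsupp f \<Longrightarrow> fsupp g \<Longrightarrow> fsupp (f + g)" unfolding fsupp_def
  by (rule finite_subset[of _ "{w. f w \<noteq> 0} \<union> {w. g w \<noteq> 0}"]) auto
lemma fsupp_diff: "fsupp f \<Longrightarrow> fsupp g \<Longrightarrow> fsupp (f - g)" unfolding fsupp_def
  by (rule finite_subset[of _ "{w. f w \<noteq> 0} \<union> {w. g w \<noteq> 0}"]) auto
lemma fsupp_scale: "fsupp f \<Longrightarrow> fsupp (fscale c f)" unfolding fsupp_def fscale_def
  by (rule finite_subset[of _ "{w. f w \<noteq> 0}"]) auto
lemma gstar_gstar[simp]: "gstar (gstar g) = g" by (cases g) auto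
lemma fsupp_star: "fsupp f \<Longrightarrow> fsupp (fstar f)" unfolding fsupp_def fstar_def
proof -
  assume "finite {w. f w \<noteq> 0}"
  then have "finite ((\<lambda>w. rev (map gstar w)) ` {w. f w \<noteq> 0})" by simp
  moreover have "{w. cnj (f (rev (map gstar w))) \<noteq> 0} \<subseteq> (\<lambda>w. rev (map gstar w)) ` {w. f w \<noteq> 0}"
  proof
    fix w assume "w \<in> {w. cnj (f (rev (map gstar w))) \<noteq> 0}"
    then have "f (rev (map gstar w)) \<noteq> 0" by simp
    moreover have "w = rev (map gstar (rev (map gstar w)))" by (simp add: rev_map o_def)
    ultimately show "w \<in> (\<lambda>w. rev (map gstar w)) ` {w. f w \<noteq> 0}" by blast
  qed
  ultimately show "finite {w. cnj (f (rev (map gstar w))) \<noteq> 0}" by (rule finite_subset[rotated])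
qed

lemma fsupp_base: "r \<in> base_rels q \<Longrightarrow> fsupp r"
  unfolding base_rels_def by (auto intro!: fsupp_diff fsupp_scale fsupp_wd)
lemma fsupp_rels: "r \<in> rels q \<Longrightarrow> fsupp r"
  unfolding rels_def using fsupp_base fsupp_star by auto

section \<open>Ideals in P\<close>

definition is_ideal :: "P set \<Rightarrow> bool" where
  "is_ideal I \<longleftrightarrow> 0 \<in> I \<and> (\<forall>x\<in>I. \<forall>y\<in>I. x + y \<in> I) \<and> (\<forall>x\<in>I. \<forall>a b. a * x * b \<in> I)"

inductive_set Jp :: "P set \<Rightarrow> P set" for R where
  zero: "0 \<in> Jp R"
| step: "x \<in> Jp R \<Longrightarrow> r \<in> R \<Longrightarrow> x + Poly_Mapping.single u c * r * Poly_Mapping.single v 1 \<in> Jp R"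

lemma Jp_sub: assumes K: "is_ideal K" "R \<subseteq> K" shows "Jp R \<subseteq> K"
proof
  fix x assume "x \<in> Jp R"
  then show "x \<in> K"
    by (induction rule: Jp.induct) (use K in \<open>auto simp: is_ideal_def\<close>)
qed

lemma Jp_add: assumes "x \<in> Jp R" "y \<in> Jp R" shows "x + y \<in> Jp R"
  using assms(2)
proof (induction y rule: Jp.induct)
  case zero then show ?case using assms(1) by simp
next
  case (step y r u c v)
  then show ?case using Jp.step[OF step.IH step.hyps(2), of u c v] by (simp add: add.assoc)
qed

lemma Jp_lsingle: "x \<in> Jp R \<Longrightarrow> Poly_Mapping.single l d * x \<in> Jp R"
proof (induction x rule: Jp.induct)
  case zero then show ?case by (simp add: Jp.zero)
next
  case (step y r u c v)
  then show ?case using Jp.step[OF step.IH step.hyps(2), of "l@u" "d*c" v]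
    by (simp add: distrib_left mult.assoc[symmetric] single_mult_list)
qed

lemma single_sc: "Poly_Mapping.single l c = sc c * Poly_Mapping.single l 1"
  by (simp add: sc_single)

lemma Jp_rsingle: "x \<in> Jp R \<Longrightarrow> x * Poly_Mapping.single l d \<in> Jp R"
proof (induction x rule: Jp.induct)
  case zero then show ?case by (simp add: Jp.zero)
next
  case (step y r u c v)
  have "Poly_Mapping.single u c * r * Poly_Mapping.single v 1 * Poly_Mapping.single l d
      = Poly_Mapping.single u (c*d) * r * Poly_Mapping.single (v@l) 1"
  proof -
    have e1: "Poly_Mapping.single v 1 * Poly_Mapping.single l d = sc d * Poly_Mapping.single (v@l) (1::complex)"
      by (simp add: single_mult_list sc_single)
    have "Poly_Mapping.single u c * r * Poly_Mapping.single v 1 * Poly_Mapping.single l d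
       = Poly_Mapping.single u c * r * (sc d * Poly_Mapping.single (v@l) 1)"
      by (simp add: mult.assoc e1)
    also have "\<dots> = (sc d * Poly_Mapping.single u c) * r * Poly_Mapping.single (v@l) 1"
      by (simp add: mult.assoc sc_comm2)
    finally show ?thesis by (simp add: sc_single mult.commute)
  qed
  then show ?case using Jp.step[OF step.IH step.hyps(2), of "u" "c*d" "v@l"]
    by (simp add: distrib_right)
qed

lemma Jp_lmul: "x \<in> Jp R \<Longrightarrow> a * x \<in> Jp R"
  by (induction a rule: pm_induct) (auto simp: distrib_right Jp.zero intro!: Jp_add Jp_lsingle)
lemma Jp_rmul: "x \<in> Jp R \<Longrightarrow> x * a \<in> Jp R"
  by (induction a rule: pm_induct) (auto simp: distrib_left Jp.zero intro!: Jp_add Jp_rsingle)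

lemma Jp_ideal: "is_ideal (Jp R)"
  unfolding is_ideal_def by (auto intro: Jp.zero Jp_add Jp_lmul Jp_rmul)

lemma Jp_base: "r \<in> R \<Longrightarrow> r \<in> Jp R"
  using Jp.step[OF Jp.zero, of r R "[]" 1 "[]"] by (simp add: zero_list_def[symmetric])

definition RP :: "real \<Rightarrow> P set" where "RP q = {r. lk r \<in> rels q}"

lemma Jp_to_gen: "x \<in> Jp (RP q) \<Longrightarrow> lk x \<in> gen_ideal (rels q)"
proof (induction x rule: Jp.induct)
  case zero then show ?case by (simp only: lookup_zero_fun gen_ideal.zero)
next
  case (step x r u c v)
  have "lk (Poly_Mapping.single u c * r * Poly_Mapping.single v 1) = fscale c (fmul (fmul (wd u) (lk r)) (wd v))"
    by (simp add: lookup_mult_fmul lookup_single_wd fmul_scale_left fmul_scale_right)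
       (rule ext, simp add: fscale_def)
  moreover have "lk r \<in> rels q" using step.hyps(2) by (simp add: RP_def)
  ultimately show ?case using gen_ideal.step[OF _ step.IH, of "lk r" c u v]
    by (simp only: lk_add)
qed

lemma gen_to_Jp: "p \<in> gen_ideal (rels q) \<Longrightarrow> \<exists>x\<in>Jp (RP q). lk x = p"
proof (induction p rule: gen_ideal.induct)
  case zero then show ?case using Jp.zero by force
next
  case (step r p c u v)
  obtain x where x: "x \<in> Jp (RP q)" "lk x = p" using step by blast
  have fr: "finite {w. r w \<noteq> 0}" using fsupp_rels[OF step(1)] by (simp add: fsupp_def)
  define r' where "r' = Abs_poly_mapping r"
  have lr: "lk r' = r" using fr by (simp add: r'_def Abs_poly_mapping_inverse)
  have "r' \<in> RP q" using lr step(1) by (simp add: RP_def)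
  moreover have "lk (x + Poly_Mapping.single u c * r' * Poly_Mapping.single v 1) = p + fscale c (fmul (fmul (wd u) r) (wd v))"
    by (simp add: lk_add lookup_mult_fmul lookup_single_wd fmul_scale_left fmul_scale_right x lr)
       (rule ext, simp add: fscale_def)
  ultimately show ?case using Jp.step[OF x(1)] by blast
qed

definition cg :: "P set \<Rightarrow> P \<Rightarrow> P \<Rightarrow> bool" where "cg I a b \<longleftrightarrow> a - b \<in> I"

locale idl = fixes I :: "P set" assumes idl: "is_ideal I"
begin

lemma mem_zero: "0 \<in> I" using idl by (simp add: is_ideal_def)
lemma mem_add: "x \<in> I \<Longrightarrow> y \<in> I \<Longrightarrow> x + y \<in> I" using idl by (simp add: is_ideal_def)
lemma mem_mult: "x \<in> I \<Longrightarrow> a * x * b \<in> I" using idl by (simp add: is_ideal_def)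
lemma mem_neg: "x \<in> I \<Longrightarrow> - x \<in> I" using mem_mult[of x "-1" 1] by simp
lemma mem_diff: "x \<in> I \<Longrightarrow> y \<in> I \<Longrightarrow> x - y \<in> I" using mem_add mem_neg by (metis diff_conv_add_uminus)

lemma cg_refl[simp]: "cg I a a" by (simp add: cg_def mem_zero)
lemma cg_eq: "a = b \<Longrightarrow> cg I a b" by simp
lemma cg_sym: "cg I a b \<Longrightarrow> cg I b a" unfolding cg_def using mem_neg by fastforce
lemma cg_trans[trans]: "cg I a b \<Longrightarrow> cg I b c \<Longrightarrow> cg I a c"
  unfolding cg_def using mem_add by fastforce
lemma cg_trans_eq1[trans]: "a = b \<Longrightarrow> cg I b c \<Longrightarrow> cg I a c" by simp
lemma cg_trans_eq2[trans]: "cg I a b \<Longrightarrow> b = c \<Longrightarrow> cg I a c" by simp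
lemma cg_add: "cg I a b \<Longrightarrow> cg I c d \<Longrightarrow> cg I (a + c) (b + d)"
  unfolding cg_def using mem_add by (metis add_diff_add)
lemma cg_diff: assumes "cg I a b" "cg I c d" shows "cg I (a - c) (b - d)"
proof -
  have e: "a - c - (b - d) = (a - b) - (c - d)" by (simp add: algebra_simps)
  show ?thesis unfolding cg_def e using assms mem_diff unfolding cg_def by blast
qed
lemma cg_mult: "cg I a b \<Longrightarrow> cg I (x * a * y) (x * b * y)"
  unfolding cg_def using mem_mult[of "a - b" x y] by (simp add: algebra_simps)
lemma cg_lm: "cg I a b \<Longrightarrow> cg I (x * a) (x * b)" using cg_mult[of a b x 1] by simp
lemma cg_rm: "cg I a b \<Longrightarrow> cg I (a * y) (b * y)" using cg_mult[of a b 1 y] by simp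
lemma cg_mem: "x \<in> I \<Longrightarrow> cg I x 0" by (simp add: cg_def)
lemma cg_mem2: "a - b \<in> I \<Longrightarrow> cg I a b" by (simp add: cg_def)

lemma G1:
  assumes "cg I (a * b) (sc c * (b * a))"
  shows "cg I (a * b ^ n) (sc (c ^ n) * (b ^ n * a))"
proof (induction n)
  case 0 then show ?case by (simp add: sc_one)
next
  case (Suc n)
  have "a * b ^ Suc n = (a * b) * b ^ n" by (simp add: mult.assoc)
  also have "cg I \<dots> (sc c * (b * a) * b ^ n)" using cg_rm[OF assms] .
  also have "sc c * (b * a) * b ^ n = sc c * b * (a * b ^ n)" by (simp add: mult.assoc)
  also have "cg I \<dots> (sc c * b * (sc (c ^ n) * (b ^ n * a)))" using cg_lm[OF Suc.IH] .
  also have "sc c * b * (sc (c ^ n) * (b ^ n * a)) = sc (c ^ Suc n) * (b ^ Suc n * a)"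
    by (simp only: mult.assoc sc_comm2[of b] sc_assoc2 power_Suc)
  finally show ?case .
qed

lemma G2:
  assumes h1: "cg I (a * b) (b * a + sc c * y)" and h2: "cg I (y * b) (sc d * (b * y))"
  shows "cg I (a * b ^ Suc n) (b ^ Suc n * a + sc (c * (\<Sum>i\<le>n. d ^ i)) * (b ^ n * y))"
proof (induction n)
  case 0 then show ?case using h1 by simp
next
  case (Suc n)
  have "a * b ^ Suc (Suc n) = (a * b) * b ^ Suc n" by (simp add: mult.assoc)
  also have "cg I \<dots> ((b * a + sc c * y) * b ^ Suc n)" using cg_rm[OF h1] .
  also have "(b * a + sc c * y) * b ^ Suc n = b * (a * b ^ Suc n) + sc c * (y * b ^ Suc n)"
    by (simp only: distrib_right mult.assoc)
  also have "cg I \<dots> (b * (b ^ Suc n * a + sc (c * (\<Sum>i\<le>n. d ^ i)) * (b ^ n * y)) + sc c * (sc (d ^ Suc n) * (b ^ Suc n * y)))"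
    by (rule cg_add[OF cg_lm[OF Suc.IH] cg_lm[OF G1[OF h2]]])
  also have "(b * (b ^ Suc n * a + sc (c * (\<Sum>i\<le>n. d ^ i)) * (b ^ n * y)) + sc c * (sc (d ^ Suc n) * (b ^ Suc n * y)))
     = b ^ Suc (Suc n) * a + sc (c * (\<Sum>i\<le>Suc n. d ^ i)) * (b ^ Suc n * y)"
  proof -
    have "b * (b ^ Suc n * a + sc (c * (\<Sum>i\<le>n. d ^ i)) * (b ^ n * y)) + sc c * (sc (d ^ Suc n) * (b ^ Suc n * y))
      = b ^ Suc (Suc n) * a + (sc (c * (\<Sum>i\<le>n. d ^ i)) * (b ^ Suc n * y) + sc (c * d ^ Suc n) * (b ^ Suc n * y))"
      by (simp only: distrib_left mult.assoc sc_comm2[of b] sc_assoc2 power_Suc add.assoc)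
    also have "\<dots> = b ^ Suc (Suc n) * a + sc (c * (\<Sum>i\<le>Suc n. d ^ i)) * (b ^ Suc n * y)"
      by (simp only: distrib_right[symmetric] sc_add sum.atMost_Suc distrib_left)
    finally show ?thesis .
  qed
  finally show ?case .
qed

end

abbreviation "A \<equiv> gn X1"
abbreviation "As \<equiv> gn X1s"
abbreviation "B \<equiv> gn X2"
abbreviation "Bs \<equiv> gn X2s"
abbreviation "G \<equiv> gn Qg"
definition "Qp = G - A * As - B * Bs"

definition "p1 q = A * B - sc (of_real q) * (B * A)"
definition "p2 q = As * B - sc (of_real q) * (B * As)"
definition "p3 q = Bs * B - sc (of_real (q^2)) * (B * Bs) - sc (of_real (1 - q^2)) * G"
definition "p4 q = As * A - sc (of_real (q^2)) * (A * As) - sc (of_real (1 - q^2)) * (G - B * Bs)"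
definition "p1s q = Bs * As - sc (of_real q) * (As * Bs)"
definition "p2s q = Bs * A - sc (of_real q) * (A * Bs)"
definition "p5 g = G * gn g - gn g * G"
definition "p5s g = gn (gstar g) * G - G * gn (gstar g)"

lemma fscale_one: "fscale 1 f = f" by (simp add: fscale_def)
lemma lk_gn: "lk (gn g) = wd [g]" by (simp add: gn_def lookup_single_wd fscale_one)
lemma lk_gn2: "lk (gn g * gn h) = wd [g, h]" by (simp add: gn_def single_mult_list lookup_single_wd fscale_one)

lemma fstar_diff: "fstar (f - g) = fstar f - fstar g" by (rule ext) (simp add: fstar_def)
lemma fstar_scale: "fstar (fscale c f) = fscale (cnj c) (fstar f)" by (rule ext) (simp add: fstar_def fscale_def)
lemma rev_map_gstar: "rev (map gstar (rev (map gstar w))) = w" by (simp add: rev_map o_def)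
lemma fstar_wd: "fstar (wd l) = wd (rev (map gstar l))"
proof (rule ext)
  fix w
  have "(rev (map gstar w) = l) \<longleftrightarrow> (w = rev (map gstar l))" using rev_map_gstar by metis
  then show "fstar (wd l) w = wd (rev (map gstar l)) w" by (simp add: fstar_def wd_def)
qed

lemmas lkrules = lk_diff lookup_sc_mult lk_gn lk_gn2 fstar_diff fstar_scale fstar_wd

lemma lk_p: "lk (p1 q) = wd [X1, X2] - fscale (of_real q) (wd [X2, X1])"
  "lk (p2 q) = wd [X1s, X2] - fscale (of_real q) (wd [X2, X1s])"
  "lk (p3 q) = wd [X2s, X2] - fscale (of_real (q^2)) (wd [X2, X2s]) - fscale (of_real (1 - q^2)) (wd [Qg])"
  "lk (p4 q) = wd [X1s, X1] - fscale (of_real (q^2)) (wd [X1, X1s]) - fscale (of_real (1 - q^2)) (wd [Qg] - wd [X2, X2s])"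
  "lk (p1s q) = fstar (wd [X1, X2] - fscale (of_real q) (wd [X2, X1]))"
  "lk (p2s q) = fstar (wd [X1s, X2] - fscale (of_real q) (wd [X2, X1s]))"
  "lk (p5 g) = wd [Qg, g] - wd [g, Qg]"
  "lk (p5s g) = fstar (wd [Qg, g] - wd [g, Qg])"
  by (simp_all add: p1_def p2_def p3_def p4_def p1s_def p2s_def p5_def p5s_def lkrules)

lemma lk_inj: "lk x = lk y \<Longrightarrow> x = y" by (simp add: poly_mapping_eqI)

lemma fstar_p3: "fstar (lk (p3 q)) = lk (p3 q)" by (simp add: lk_p lkrules)
lemma fstar_p4: "fstar (lk (p4 q)) = lk (p4 q)" by (simp add: lk_p lkrules)

lemma RP_char: "r \<in> RP q \<longleftrightarrow> r \<in> {p1 q, p2 q, p3 q, p4 q, p1s q, p2s q} \<union> range p5 \<union> range p5s"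
proof
  assume "r \<in> RP q"
  then have "lk r \<in> base_rels q \<or> lk r \<in> fstar ` base_rels q" by (simp add: RP_def rels_def)
  then show "r \<in> {p1 q, p2 q, p3 q, p4 q, p1s q, p2s q} \<union> range p5 \<union> range p5s"
  proof
    assume "lk r \<in> base_rels q"
    then have "lk r = lk (p1 q) \<or> lk r = lk (p2 q) \<or> lk r = lk (p3 q) \<or> lk r = lk (p4 q) \<or> (\<exists>g. lk r = lk (p5 g))"
      unfolding base_rels_def lk_p by blast
    then show ?thesis using lk_inj by blast
  next
    assume "lk r \<in> fstar ` base_rels q"
    then have "lk r = lk (p1s q) \<or> lk r = lk (p2s q) \<or> lk r = fstar (lk (p3 q)) \<or> lk r = fstar (lk (p4 q)) \<or> (\<exists>g. lk r = lk (p5s g))"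
      unfolding base_rels_def lk_p by blast
    then show ?thesis using lk_inj unfolding fstar_p3 fstar_p4 by blast
  qed
next
  assume "r \<in> {p1 q, p2 q, p3 q, p4 q, p1s q, p2s q} \<union> range p5 \<union> range p5s"
  then show "r \<in> RP q"
    unfolding RP_def rels_def base_rels_def by (auto simp: lk_p)
qed

lemma single_mult_list2: "Poly_Mapping.single l c * (Poly_Mapping.single m d * y) = (Poly_Mapping.single (l @ m) (c * d) * y :: P)"
  by (simp add: mult.assoc[symmetric] single_mult_list)

lemmas to_single = gn_def sc_def Qp_def ring_distribs mult.assoc single_mult_list single_mult_list2
  lookup_add lookup_minus lookup_single when_def
  p1_def p2_def p3_def p4_def p1s_def p2s_def p5_def p5s_def

definition "d1 q = B * A - sc (inverse (of_real q)) * (A * B)"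
definition "d3 q = As * Bs - sc (inverse (of_real q)) * (Bs * As)"
definition "d5 q = As * A - A * As - sc (1 - (of_real q)^2) * Qp"
definition "d6 q = Bs * B - B * Bs - sc (1 - (of_real q)^2) * (Qp + A * As)"
definition "d7a q = Qp * A - sc ((of_real q)^2) * (A * Qp)"
definition "d7b q = Qp * B - sc ((of_real q)^2) * (B * Qp)"
definition "d7c q = As * Qp - sc ((of_real q)^2) * (Qp * As)"
definition "d7d q = Bs * Qp - sc ((of_real q)^2) * (Qp * Bs)"

lemmas d_defs = d1_def d3_def d5_def d6_def d7a_def d7b_def d7c_def d7d_def

lemma cert_d0: assumes q: "q \<noteq> 0" shows "d1 q = - sc (inverse (of_real q)) * p1 q"
  apply (rule poly_mapping_eqI) using q by (simp add: to_single d_defs; auto simp: algebra_simps power2_eq_square)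

lemma cert_d1: assumes q: "q \<noteq> 0" shows "d3 q = - sc (inverse (of_real q)) * p1s q"
  apply (rule poly_mapping_eqI) using q by (simp add: to_single d_defs; auto simp: algebra_simps power2_eq_square)

lemma cert_d2: assumes q: "q \<noteq> 0" shows "d5 q = p4 q"
  apply (rule poly_mapping_eqI) using q by (simp add: to_single d_defs; auto simp: algebra_simps power2_eq_square)

lemma cert_d3: assumes q: "q \<noteq> 0" shows "d6 q = p3 q"
  apply (rule poly_mapping_eqI) using q by (simp add: to_single d_defs; auto simp: algebra_simps power2_eq_square)

lemma cert_d4: assumes q: "q \<noteq> 0" shows "d7a q = p5 X1 - A * p4 q - B * p2s q + p1 q * Bs"
  apply (rule poly_mapping_eqI) using q by (simp add: to_single d_defs; auto simp: algebra_simps power2_eq_square)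

lemma cert_d5: assumes q: "q \<noteq> 0" shows "d7b q = p5 X2 - A * p2 q - sc (of_real q) * p1 q * As - B * p3 q"
  apply (rule poly_mapping_eqI) using q by (simp add: to_single d_defs; auto simp: algebra_simps power2_eq_square)

lemma cert_d6: assumes q: "q \<noteq> 0" shows "d7c q = - p5 X1s - p4 q * As - p2 q * Bs + B * p1s q"
  apply (rule poly_mapping_eqI) using q by (simp add: to_single d_defs; auto simp: algebra_simps power2_eq_square)

lemma cert_d7: assumes q: "q \<noteq> 0" shows "d7d q = - p5 X2s - p2s q * As - sc (of_real q) * A * p1s q - p3 q * Bs"
  apply (rule poly_mapping_eqI) using q by (simp add: to_single d_defs; auto simp: algebra_simps power2_eq_square)

lemmas cert_d = cert_d0 cert_d1 cert_d2 cert_d3 cert_d4 cert_d5 cert_d6 cert_d7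


lemma cert_p:
  assumes q: "q \<noteq> 0"
  shows "p1 q = - sc (of_real q) * d1 q"
  "p1s q = - sc (of_real q) * d3 q"
  "p4 q = d5 q" "p3 q = d6 q"
  "p5 X1 = d7a q + A * d5 q + B * p2s q + sc (of_real q) * d1 q * Bs"
  "p5 X2 = d7b q + A * p2 q - sc (of_real q) * sc (of_real q) * d1 q * As + B * d6 q"
  "p5 X1s = - d7c q - d5 q * As - p2 q * Bs - B * (sc (of_real q) * d3 q)"
  "p5 X2s = - d7d q - p2s q * As + sc (of_real q) * A * (sc (of_real q) * d3 q) - d6 q * Bs"
  "p5 Qg = 0"
  "p5s g = - p5 (gstar g)"
  using q by (simp_all add: cert_d) (rule poly_mapping_eqI; simp add: to_single d_defs; auto simp: algebra_simps power2_eq_square)+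

definition "Dset q = {d1 q, p2 q, d3 q, p2s q, d5 q, d6 q, d7a q, d7b q, d7c q, d7d q}"

context idl
begin
lemma mem_lm: "x \<in> I \<Longrightarrow> a * x \<in> I" using mem_mult[of x a 1] by simp
lemma mem_rm: "x \<in> I \<Longrightarrow> x * a \<in> I" using mem_mult[of x 1 a] by simp

lemma RP_to_D: assumes q: "q \<noteq> 0" and R: "RP q \<subseteq> I" shows "Dset q \<subseteq> I"
proof -
  have m: "p1 q \<in> I" "p2 q \<in> I" "p3 q \<in> I" "p4 q \<in> I" "p1s q \<in> I" "p2s q \<in> I" "\<And>g. p5 g \<in> I"
    using R by (auto simp: RP_char)
  show ?thesis unfolding Dset_def using m
    by (simp add: cert_d[OF q]) (blast intro: mem_add mem_diff mem_lm mem_rm mem_neg)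
qed

lemma D_to_RP: assumes q: "q \<noteq> 0" and D: "Dset q \<subseteq> I" shows "RP q \<subseteq> I"
proof -
  have m: "d1 q \<in> I" "p2 q \<in> I" "d3 q \<in> I" "p2s q \<in> I" "d5 q \<in> I" "d6 q \<in> I" "d7a q \<in> I" "d7b q \<in> I" "d7c q \<in> I" "d7d q \<in> I"
    using D by (auto simp: Dset_def)
  have p5: "p5 g \<in> I" for g
    by (cases g) (simp_all add: cert_p[OF q] m mem_zero, (blast intro: mem_add mem_diff mem_lm mem_rm mem_neg m)+)
  show ?thesis
  proof
    fix r assume "r \<in> RP q"
    then show "r \<in> I" unfolding RP_char using m p5
      by (auto simp: cert_p[OF q] intro: mem_neg mem_lm)
  qed
qed
end

locale rel = idl +
  fixes q :: real
  assumes q: "q \<noteq> 0" and D: "Dset q \<subseteq> I"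
begin

abbreviation "zq \<equiv> (complex_of_real q)"
abbreviation "wq \<equiv> inverse (complex_of_real q)"

lemma RPI: "RP q \<subseteq> I" using D_to_RP[OF q D] .

lemma cg_inv: "cg I x (sc c * y) \<Longrightarrow> c \<noteq> 0 \<Longrightarrow> cg I y (sc (inverse c) * x)"
proof -
  assume h: "cg I x (sc c * y)" "c \<noteq> 0"
  have "cg I (sc (inverse c) * x) (sc (inverse c) * (sc c * y))" using cg_lm[OF h(1)] .
  also have "sc (inverse c) * (sc c * y) = y" using h(2) by (simp add: sc_assoc2 sc_one)
  finally show ?thesis by (rule cg_sym)
qed

lemma c1: "cg I (B * A) (sc wq * (A * B))"
  using D by (intro cg_mem2) (auto simp: Dset_def d1_def)
lemma c1': "cg I (A * B) (sc zq * (B * A))"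
  using RPI by (intro cg_mem2) (auto simp: RP_char p1_def)
lemma c2: "cg I (As * B) (sc zq * (B * As))"
  using D by (intro cg_mem2) (auto simp: Dset_def p2_def)
lemma c3: "cg I (As * Bs) (sc wq * (Bs * As))"
  using D by (intro cg_mem2) (auto simp: Dset_def d3_def)
lemma c4: "cg I (Bs * A) (sc zq * (A * Bs))"
  using D by (intro cg_mem2) (auto simp: Dset_def p2s_def)
lemma c5: "cg I (As * A) (A * As + sc (1 - zq^2) * Qp)"
  using D by (intro cg_mem2) (auto simp: Dset_def d5_def diff_diff_eq)
lemma c6: "cg I (Bs * B) (B * Bs + sc (1 - zq^2) * (Qp + A * As))"
  using D by (intro cg_mem2) (auto simp: Dset_def d6_def diff_diff_eq)
lemma c7a: "cg I (Qp * A) (sc (zq^2) * (A * Qp))"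
  using D by (intro cg_mem2) (auto simp: Dset_def d7a_def)
lemma c7b: "cg I (Qp * B) (sc (zq^2) * (B * Qp))"
  using D by (intro cg_mem2) (auto simp: Dset_def d7b_def)
lemma c7c: "cg I (As * Qp) (sc (zq^2) * (Qp * As))"
  using D by (intro cg_mem2) (auto simp: Dset_def d7c_def)
lemma c7d: "cg I (Bs * Qp) (sc (zq^2) * (Qp * Bs))"
  using D by (intro cg_mem2) (auto simp: Dset_def d7d_def)
lemma c7c': "cg I (Qp * As) (sc (inverse (zq^2)) * (As * Qp))"
  using cg_inv[OF c7c] q by simp
lemma c7d': "cg I (Qp * Bs) (sc (inverse (zq^2)) * (Bs * Qp))"
  using cg_inv[OF c7d] q by simp

lemma cert8: "(Qp + A * As) * B - sc (zq^2) * (B * (Qp + A * As)) = p5 X2 - B * p3 q"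
  by (rule poly_mapping_eqI; simp add: to_single; auto simp: algebra_simps power2_eq_square)

lemma c8: "cg I ((Qp + A * As) * B) (sc (zq^2) * (B * (Qp + A * As)))"
proof -
  have "p5 X2 \<in> I" "p3 q \<in> I" using RPI by (auto simp: RP_char)
  then show ?thesis by (intro cg_mem2) (simp add: cert8 mem_diff mem_lm)
qed

end

definition "L3 u v = As ^ u * Qp ^ v"
definition "L2 t u v = Bs ^ t * L3 u v"
definition "L1 s t u v = B ^ s * L2 t u v"
definition "M r s t u v = A ^ r * L1 s t u v"

inductive_set spn :: "P set" where
  zero: "0 \<in> spn"
| step: "x \<in> spn \<Longrightarrow> x + sc c * M r s t u v \<in> spn"

context rel
begin

definition pr :: "P \<Rightarrow> P \<Rightarrow> bool" where "pr X Y \<longleftrightarrow> (\<exists>c. cg I X (sc c * Y))"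

lemma pr_cg: "cg I X (sc c * Y) \<Longrightarrow> pr X Y" unfolding pr_def by blast
lemma pr_eq: "X = Y \<Longrightarrow> pr X Y" using pr_cg[of X 1 Y] by (simp add: sc_one)
lemma pr_trans[trans]: "pr X Y \<Longrightarrow> pr Y Z \<Longrightarrow> pr X Z"
proof -
  assume "pr X Y" "pr Y Z"
  then obtain c d where h: "cg I X (sc c * Y)" "cg I Y (sc d * Z)" unfolding pr_def by blast
  have "cg I X (sc c * (sc d * Z))" using cg_trans[OF h(1) cg_lm[OF h(2)]] .
  then show ?thesis by (simp add: sc_assoc2 pr_cg)
qed
lemma pr_trans_eq1[trans]: "X = Y \<Longrightarrow> pr Y Z \<Longrightarrow> pr X Z" by simp
lemma pr_trans_eq2[trans]: "pr X Y \<Longrightarrow> Y = Z \<Longrightarrow> pr X Z" by simp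
lemma pr_ctx: "pr X Y \<Longrightarrow> pr (a * X * b) (a * Y * b)"
proof -
  assume "pr X Y"
  then obtain c where h: "cg I X (sc c * Y)" unfolding pr_def by blast
  have "cg I (a * X * b) (a * (sc c * Y) * b)" using cg_mult[OF h] .
  also have "a * (sc c * Y) * b = sc c * (a * Y * b)" by (simp only: sc_comm2[of a] mult.assoc)
  finally show ?thesis by (rule pr_cg)
qed
lemma pr_lm: "pr X Y \<Longrightarrow> pr (a * X) (a * Y)" using pr_ctx[of X Y a 1] by simp
lemma pr_rm: "pr X Y \<Longrightarrow> pr (X * b) (Y * b)" using pr_ctx[of X Y 1 b] by simp
lemma pr_G1: "cg I (a * b) (sc c * (b * a)) \<Longrightarrow> pr (a * b ^ n) (b ^ n * a)"
  using G1 pr_cg by blast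

lemma p_QA: "pr (Qp * A ^ n) (A ^ n * Qp)" using pr_G1[OF c7a] .
lemma p_QB: "pr (Qp * B ^ n) (B ^ n * Qp)" using pr_G1[OF c7b] .
lemma p_QBs: "pr (Qp * Bs ^ n) (Bs ^ n * Qp)" using pr_G1[OF c7d'] .
lemma p_QAs: "pr (Qp * As ^ n) (As ^ n * Qp)" using pr_G1[OF c7c'] .
lemma p_AsB: "pr (As * B ^ n) (B ^ n * As)" using pr_G1[OF c2] .
lemma p_AsBs: "pr (As * Bs ^ n) (Bs ^ n * As)" using pr_G1[OF c3] .
lemma p_BsA: "pr (Bs * A ^ n) (A ^ n * Bs)" using pr_G1[OF c4] .
lemma p_BA: "pr (B * A ^ n) (A ^ n * B)" using pr_G1[OF c1] .
lemma p_BnA: "pr (B ^ n * A) (A * B ^ n)"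
proof -
  have "cg I (A * B ^ n) (sc (zq ^ n) * (B ^ n * A))" using G1[OF c1'] .
  from cg_inv[OF this] q show ?thesis by (auto intro: pr_cg)
qed

lemma QL3: "pr (Qp * L3 u v) (L3 u (Suc v))"
proof -
  have "Qp * L3 u v = (Qp * As ^ u) * Qp ^ v" by (simp add: L3_def mult.assoc)
  also have "pr \<dots> ((As ^ u * Qp) * Qp ^ v)" by (rule pr_rm[OF p_QAs])
  also have "(As ^ u * Qp) * Qp ^ v = L3 u (Suc v)" by (simp add: L3_def mult.assoc)
  finally show ?thesis .
qed

lemma QL2: "pr (Qp * L2 t u v) (L2 t u (Suc v))"
proof -
  have "Qp * L2 t u v = (Qp * Bs ^ t) * L3 u v" by (simp add: L2_def mult.assoc)
  also have "pr \<dots> ((Bs ^ t * Qp) * L3 u v)" by (rule pr_rm[OF p_QBs])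
  also have "(Bs ^ t * Qp) * L3 u v = Bs ^ t * (Qp * L3 u v)" by (simp add: mult.assoc)
  also have "pr \<dots> (Bs ^ t * L3 u (Suc v))" by (rule pr_lm[OF QL3])
  also have "Bs ^ t * L3 u (Suc v) = L2 t u (Suc v)" by (simp add: L2_def)
  finally show ?thesis .
qed

lemma QL1: "pr (Qp * L1 s t u v) (L1 s t u (Suc v))"
proof -
  have "Qp * L1 s t u v = (Qp * B ^ s) * L2 t u v" by (simp add: L1_def mult.assoc)
  also have "pr \<dots> ((B ^ s * Qp) * L2 t u v)" by (rule pr_rm[OF p_QB])
  also have "(B ^ s * Qp) * L2 t u v = B ^ s * (Qp * L2 t u v)" by (simp add: mult.assoc)
  also have "pr \<dots> (B ^ s * L2 t u (Suc v))" by (rule pr_lm[OF QL2])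
  also have "B ^ s * L2 t u (Suc v) = L1 s t u (Suc v)" by (simp add: L1_def)
  finally show ?thesis .
qed

lemma QM: "pr (Qp * M r s t u v) (M r s t u (Suc v))"
proof -
  have "Qp * M r s t u v = (Qp * A ^ r) * L1 s t u v" by (simp add: M_def mult.assoc)
  also have "pr \<dots> ((A ^ r * Qp) * L1 s t u v)" by (rule pr_rm[OF p_QA])
  also have "(A ^ r * Qp) * L1 s t u v = A ^ r * (Qp * L1 s t u v)" by (simp add: mult.assoc)
  also have "pr \<dots> (A ^ r * L1 s t u (Suc v))" by (rule pr_lm[OF QL1])
  also have "A ^ r * L1 s t u (Suc v) = M r s t u (Suc v)" by (simp add: M_def)
  finally show ?thesis .
qed

lemma AsL2: "pr (As * L2 t u v) (L2 t (Suc u) v)"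
proof -
  have "As * L2 t u v = (As * Bs ^ t) * L3 u v" by (simp add: L2_def mult.assoc)
  also have "pr \<dots> ((Bs ^ t * As) * L3 u v)" by (rule pr_rm[OF p_AsBs])
  also have "(Bs ^ t * As) * L3 u v = L2 t (Suc u) v" by (simp add: L2_def L3_def mult.assoc)
  finally show ?thesis .
qed

lemma AsL1: "pr (As * L1 s t u v) (L1 s t (Suc u) v)"
proof -
  have "As * L1 s t u v = (As * B ^ s) * L2 t u v" by (simp add: L1_def mult.assoc)
  also have "pr \<dots> ((B ^ s * As) * L2 t u v)" by (rule pr_rm[OF p_AsB])
  also have "(B ^ s * As) * L2 t u v = B ^ s * (As * L2 t u v)" by (simp add: mult.assoc)
  also have "pr \<dots> (B ^ s * L2 t (Suc u) v)" by (rule pr_lm[OF AsL2])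
  also have "B ^ s * L2 t (Suc u) v = L1 s t (Suc u) v" by (simp add: L1_def)
  finally show ?thesis .
qed

lemma FA: "A * M r s t u v = M (Suc r) s t u v" by (simp add: M_def mult.assoc)

lemma FB: "pr (B * M r s t u v) (M r (Suc s) t u v)"
proof -
  have "B * M r s t u v = (B * A ^ r) * L1 s t u v" by (simp add: M_def mult.assoc)
  also have "pr \<dots> ((A ^ r * B) * L1 s t u v)" by (rule pr_rm[OF p_BA])
  also have "(A ^ r * B) * L1 s t u v = M r (Suc s) t u v" by (simp add: M_def L1_def mult.assoc)
  finally show ?thesis .
qed

end

lemma spn_add: assumes "x \<in> spn" "y \<in> spn" shows "x + y \<in> spn"
  using assms(2)
proof (induction y rule: spn.induct)
  case zero then show ?case using assms(1) by simp
next
  case (step y c r s t u v)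
  then show ?case using spn.step[OF step.IH] by (simp add: add.assoc)
qed

lemma spn_sc: "x \<in> spn \<Longrightarrow> sc d * x \<in> spn"
proof (induction x rule: spn.induct)
  case zero then show ?case by (simp add: spn.zero)
next
  case (step y c r s t u v)
  then show ?case using spn.step[OF step.IH, of "d * c"] by (simp add: distrib_left sc_assoc2)
qed

lemma spn_M: "M r s t u v \<in> spn"
  using spn.step[OF spn.zero, of 1] by (simp add: sc_one)

context rel
begin

definition "SP = {x. \<exists>y\<in>spn. cg I x y}"

lemma SP_add: "x \<in> SP \<Longrightarrow> y \<in> SP \<Longrightarrow> x + y \<in> SP"
  unfolding SP_def using spn_add cg_add by blast
lemma SP_sc: "x \<in> SP \<Longrightarrow> sc c * x \<in> SP"
  unfolding SP_def using spn_sc cg_lm by blast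
lemma SP_cg: "cg I x y \<Longrightarrow> y \<in> SP \<Longrightarrow> x \<in> SP"
  unfolding SP_def using cg_trans by blast
lemma SP_pr: "pr X Y \<Longrightarrow> Y \<in> SP \<Longrightarrow> X \<in> SP"
  unfolding pr_def using SP_cg SP_sc by blast
lemma SP_M: "M r s t u v \<in> SP"
  unfolding SP_def using spn_M cg_refl by blast
lemma SP_prM: "pr X (M r s t u v) \<Longrightarrow> X \<in> SP"
  using SP_pr SP_M by blast
lemma SP_zero: "0 \<in> SP" unfolding SP_def using spn.zero cg_refl by blast

lemma SP_lm_gen:
  assumes g: "\<And>r s t u v. g * M r s t u v \<in> SP" and x: "x \<in> SP"
  shows "g * x \<in> SP"
proof -
  obtain y where y: "y \<in> spn" "cg I x y" using x unfolding SP_def by blast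
  from y(1) have "g * y \<in> SP"
  proof (induction y rule: spn.induct)
    case zero then show ?case by (simp add: SP_zero)
  next
    case (step y c r s t u v)
    have "g * (y + sc c * M r s t u v) = g * y + sc c * (g * M r s t u v)"
      by (simp add: distrib_left sc_comm2[of g])
    then show ?case using SP_add[OF step.IH SP_sc[OF g]] by simp
  qed
  then show ?thesis using SP_cg[OF cg_lm[OF y(2)]] by blast
qed

lemma FQ: "Qp * M r s t u v \<in> SP" using SP_prM[OF QM] .
lemma FA': "A * M r s t u v \<in> SP" using SP_M by (simp add: FA)
lemma FB': "B * M r s t u v \<in> SP" using SP_prM[OF FB] .

lemma FAs: "As * M r s t u v \<in> SP"
proof (cases r)
  case 0
  then have "As * M r s t u v = As * L1 s t u v" by (simp add: M_def)
  also have "pr \<dots> (L1 s t (Suc u) v)" by (rule AsL1)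
  also have "L1 s t (Suc u) v = M 0 s t (Suc u) v" by (simp add: M_def)
  finally show ?thesis by (rule SP_prM)
next
  case (Suc r')
  obtain \<gamma> where G2': "cg I (As * A ^ Suc r') (A ^ Suc r' * As + sc \<gamma> * (A ^ r' * Qp))"
    using G2[OF c5 c7a] by blast
  have "As * M r s t u v = (As * A ^ Suc r') * L1 s t u v" by (simp add: M_def Suc mult.assoc)
  also have "cg I \<dots> ((A ^ Suc r' * As + sc \<gamma> * (A ^ r' * Qp)) * L1 s t u v)" by (rule cg_rm[OF G2'])
  also have "(A ^ Suc r' * As + sc \<gamma> * (A ^ r' * Qp)) * L1 s t u v
     = A ^ Suc r' * (As * L1 s t u v) + sc \<gamma> * (A ^ r' * (Qp * L1 s t u v))"
    by (simp add: distrib_right mult.assoc)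
  finally have c: "cg I (As * M r s t u v) (A ^ Suc r' * (As * L1 s t u v) + sc \<gamma> * (A ^ r' * (Qp * L1 s t u v)))" .
  have "pr (A ^ Suc r' * (As * L1 s t u v)) (A ^ Suc r' * L1 s t (Suc u) v)" by (rule pr_lm[OF AsL1])
  then have s1: "A ^ Suc r' * (As * L1 s t u v) \<in> SP" by (rule SP_prM[unfolded M_def])
  have "pr (A ^ r' * (Qp * L1 s t u v)) (A ^ r' * L1 s t u (Suc v))" by (rule pr_lm[OF QL1])
  then have s2: "A ^ r' * (Qp * L1 s t u v) \<in> SP" by (rule SP_prM[unfolded M_def])
  show ?thesis using SP_cg[OF c SP_add[OF s1 SP_sc[OF s2]]] .
qed

lemma FBs: "Bs * M r s t u v \<in> SP"
proof -
  have "Bs * M r s t u v = (Bs * A ^ r) * L1 s t u v" by (simp add: M_def mult.assoc)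
  also have "pr \<dots> ((A ^ r * Bs) * L1 s t u v)" by (rule pr_rm[OF p_BsA])
  finally have p: "pr (Bs * M r s t u v) (A ^ r * (Bs * L1 s t u v))" by (simp add: mult.assoc)
  have "A ^ r * (Bs * L1 s t u v) \<in> SP"
  proof (cases s)
    case 0
    then have "A ^ r * (Bs * L1 s t u v) = M r 0 (Suc t) u v" by (simp add: M_def L1_def L2_def mult.assoc)
    then show ?thesis using SP_M by simp
  next
    case (Suc s')
    obtain \<gamma> where G2': "cg I (Bs * B ^ Suc s') (B ^ Suc s' * Bs + sc \<gamma> * (B ^ s' * (Qp + A * As)))"
      using G2[OF c6 c8] by blast
    have "A ^ r * (Bs * L1 s t u v) = A ^ r * (Bs * B ^ Suc s') * L2 t u v" by (simp add: L1_def Suc mult.assoc)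
    also have "cg I \<dots> (A ^ r * (B ^ Suc s' * Bs + sc \<gamma> * (B ^ s' * (Qp + A * As))) * L2 t u v)"
      by (rule cg_mult[OF G2'])
    also have "A ^ r * (B ^ Suc s' * Bs + sc \<gamma> * (B ^ s' * (Qp + A * As))) * L2 t u v
      = A ^ r * (B ^ Suc s' * (Bs * L2 t u v)) + sc \<gamma> * (A ^ r * (B ^ s' * (Qp * L2 t u v)) + A ^ r * ((B ^ s' * A) * (As * L2 t u v)))"
      by (simp add: distrib_right distrib_left mult.assoc sc_comm2[of "A ^ r"])
    finally have c: "cg I (A ^ r * (Bs * L1 s t u v)) (A ^ r * (B ^ Suc s' * (Bs * L2 t u v)) + sc \<gamma> * (A ^ r * (B ^ s' * (Qp * L2 t u v)) + A ^ r * ((B ^ s' * A) * (As * L2 t u v))))" .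
    have s1: "A ^ r * (B ^ Suc s' * (Bs * L2 t u v)) \<in> SP"
      using SP_M[of r "Suc s'" "Suc t" u v] by (simp add: M_def L1_def L2_def mult.assoc)
    have "pr (A ^ r * (B ^ s' * (Qp * L2 t u v))) (A ^ r * (B ^ s' * L2 t u (Suc v)))"
      by (rule pr_lm[OF pr_lm[OF QL2]])
    then have s2: "A ^ r * (B ^ s' * (Qp * L2 t u v)) \<in> SP" by (rule SP_prM[unfolded M_def L1_def])
    have "A ^ r * ((B ^ s' * A) * (As * L2 t u v)) = A ^ r * (B ^ s' * A) * (As * L2 t u v)" by (simp add: mult.assoc)
    also have "pr \<dots> (A ^ r * (A * B ^ s') * (As * L2 t u v))" by (rule pr_ctx[OF p_BnA])
    also have "A ^ r * (A * B ^ s') * (As * L2 t u v) = A ^ Suc r * B ^ s' * (As * L2 t u v)"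
      by (simp only: power_Suc2 mult.assoc)
    also have "\<dots> = A ^ Suc r * (B ^ s' * (As * L2 t u v))" by (simp add: mult.assoc)
    also have "pr \<dots> (A ^ Suc r * (B ^ s' * L2 t (Suc u) v))" by (rule pr_lm[OF pr_lm[OF AsL2]])
    finally have s3: "A ^ r * ((B ^ s' * A) * (As * L2 t u v)) \<in> SP" by (rule SP_prM[unfolded M_def L1_def])
    show ?thesis using SP_cg[OF c SP_add[OF s1 SP_sc[OF SP_add[OF s2 s3]]]] .
  qed
  then show ?thesis using SP_pr[OF p] by blast
qed

lemma Fgen: "gn g * M r s t u v \<in> SP"
proof (cases g)
  case X1 then show ?thesis using FA' by simp
next
  case X1s then show ?thesis using FAs by simp
next
  case X2 then show ?thesis using FB' by simp
next
  case X2s then show ?thesis using FBs by simp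
next
  case Qg
  have "G = Qp + A * As + B * Bs" by (simp add: Qp_def)
  then have "G * M r s t u v = Qp * M r s t u v + A * (As * M r s t u v) + B * (Bs * M r s t u v)"
    by (simp add: distrib_right mult.assoc)
  moreover have "A * (As * M r s t u v) \<in> SP" by (rule SP_lm_gen[OF FA' FAs])
  moreover have "B * (Bs * M r s t u v) \<in> SP" by (rule SP_lm_gen[OF FB' FBs])
  ultimately show ?thesis using Qg FQ SP_add by simp
qed

lemma SP_single: "Poly_Mapping.single l c \<in> SP"
proof (induction l arbitrary: c)
  case Nil
  have "Poly_Mapping.single [] c = sc c * M 0 0 0 0 0"
    by (simp add: M_def L1_def L2_def L3_def sc_def)
  then show ?case using SP_sc[OF SP_M] by simp
next
  case (Cons g l)
  have "Poly_Mapping.single (g # l) c = gn g * Poly_Mapping.single l c"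
    by (simp add: gn_def single_mult_list)
  then show ?case using SP_lm_gen[OF Fgen Cons.IH] by simp
qed

lemma SP_all: "x \<in> SP"
  by (induction x rule: pm_induct) (auto simp: SP_zero intro: SP_add SP_single)

end

type_synonym idx = "nat \<times> nat \<times> nat \<times> nat \<times> nat"
type_synonym V = "idx \<Rightarrow> complex"

locale ops = fixes z :: complex assumes z0: "z \<noteq> 0"
begin

abbreviation "w \<equiv> inverse z"

definition opA :: "V \<Rightarrow> V" where
  "opA x = (\<lambda>(r,s,t,u,v). case r of 0 \<Rightarrow> 0 | Suc r' \<Rightarrow> x (r',s,t,u,v))"
definition opB :: "V \<Rightarrow> V" where
  "opB x = (\<lambda>(r,s,t,u,v). case s of 0 \<Rightarrow> 0 | Suc s' \<Rightarrow> w ^ r * x (r,s',t,u,v))"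
definition opQ :: "V \<Rightarrow> V" where
  "opQ x = (\<lambda>(r,s,t,u,v). case v of 0 \<Rightarrow> 0 | Suc v' \<Rightarrow> z ^ (r+r+s+s) * w ^ (t+t+u+u) * x (r,s,t,u,v'))"
definition opAs :: "V \<Rightarrow> V" where
  "opAs x = (\<lambda>(r,s,t,u,v). (case u of 0 \<Rightarrow> 0 | Suc u' \<Rightarrow> z ^ s * w ^ t * x (r,s,t,u',v))
      + (case v of 0 \<Rightarrow> 0 | Suc v' \<Rightarrow> (1 - z ^ (r+r+2)) * z ^ (s+s) * w ^ (t+t+u+u) * x (Suc r,s,t,u,v')))"
definition opBs :: "V \<Rightarrow> V" where
  "opBs x = (\<lambda>(r,s,t,u,v). (case t of 0 \<Rightarrow> 0 | Suc t' \<Rightarrow> z ^ r * x (r,s,t',u,v))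
      + (case v of 0 \<Rightarrow> 0 | Suc v' \<Rightarrow> (1 - z ^ (s+s+2)) * z ^ r * w ^ (t+t+u+u) * x (r,Suc s,t,u,v'))
      + (case r of 0 \<Rightarrow> 0 | Suc r' \<Rightarrow> (case u of 0 \<Rightarrow> 0 | Suc u' \<Rightarrow>
           (1 - z ^ (s+s+2)) * z ^ (Suc r') * w ^ (Suc s + t) * x (r',Suc s,t,u',v))))"

lemmas op_defs = opA_def opB_def opQ_def opAs_def opBs_def

lemma id1: "opB (opA x) j = w * opA (opB x) j"
  apply (cases j) apply (rename_tac r s t u v)
  using z0 by (simp add: op_defs split: nat.split; auto simp: field_simps power_add power2_eq_square)

lemma id2: "opAs (opB x) j = z * opB (opAs x) j"
  apply (cases j) apply (rename_tac r s t u v)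
  using z0 by (simp add: op_defs split: nat.split; auto simp: field_simps power_add power2_eq_square)

lemma id3: "opAs (opBs x) j = w * opBs (opAs x) j"
  apply (cases j) apply (rename_tac r s t u v)
  using z0 by (simp add: op_defs split: nat.split; auto simp: field_simps power_add power2_eq_square)

lemma id4: "opBs (opA x) j = z * opA (opBs x) j"
  apply (cases j) apply (rename_tac r s t u v)
  using z0 by (simp add: op_defs split: nat.split; auto simp: field_simps power_add power2_eq_square)

lemma id5: "opAs (opA x) j = opA (opAs x) j + (1 - z^2) * opQ x j"
  apply (cases j) apply (rename_tac r s t u v)
  using z0 by (simp add: op_defs split: nat.split; auto simp: field_simps power_add power2_eq_square)

lemma id6: "opBs (opB x) j = opB (opBs x) j + (1 - z^2) * (opQ x j + opA (opAs x) j)"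
  apply (cases j) apply (rename_tac r s t u v)
  using z0 by (simp add: op_defs split: nat.split; auto simp: field_simps power_add power2_eq_square)

lemma id7a: "opQ (opA x) j = z^2 * opA (opQ x) j"
  apply (cases j) apply (rename_tac r s t u v)
  using z0 by (simp add: op_defs split: nat.split; auto simp: field_simps power_add power2_eq_square)

lemma id7b: "opQ (opB x) j = z^2 * opB (opQ x) j"
  apply (cases j) apply (rename_tac r s t u v)
  using z0 by (simp add: op_defs split: nat.split; auto simp: field_simps power_add power2_eq_square)

lemma id7c: "opAs (opQ x) j = z^2 * opQ (opAs x) j"
  apply (cases j) apply (rename_tac r s t u v)
  using z0 by (simp add: op_defs split: nat.split; auto simp: field_simps power_add power2_eq_square)

lemma id7d: "opBs (opQ x) j = z^2 * opQ (opBs x) j"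
  apply (cases j) apply (rename_tac r s t u v)
  using z0 by (simp add: op_defs split: nat.split; auto simp: field_simps power_add power2_eq_square)

end

definition sv :: "complex \<Rightarrow> V \<Rightarrow> V" where "sv c x = (\<lambda>j. c * x j)"
definition lin :: "(V \<Rightarrow> V) \<Rightarrow> bool" where
  "lin T \<longleftrightarrow> (\<forall>x y. T (x + y) = T x + T y) \<and> (\<forall>c x. T (sv c x) = sv c (T x))"

lemma lin_zero: "lin T \<Longrightarrow> T 0 = 0"
proof -
  assume "lin T"
  then have "T (sv 0 0) = sv 0 (T 0)" by (simp add: lin_def)
  moreover have "sv 0 (0::V) = 0" "sv 0 (T 0) = 0" by (auto simp: sv_def)
  ultimately show ?thesis by simp
qed
lemma lin_add: "lin T \<Longrightarrow> T (x + y) = T x + T y" by (simp add: lin_def)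
lemma lin_sv: "lin T \<Longrightarrow> T (sv c x) = sv c (T x)" by (simp add: lin_def)
lemma lin_comp: "lin S \<Longrightarrow> lin T \<Longrightarrow> lin (\<lambda>x. S (T x))" by (simp add: lin_def)
lemma lin_id: "lin (\<lambda>x. x)" by (simp add: lin_def)
lemma lin_plus: "lin S \<Longrightarrow> lin T \<Longrightarrow> lin (\<lambda>x. S x + T x)"
  unfolding lin_def by (auto simp: sv_def fun_eq_iff algebra_simps)

context ops
begin

lemma lin_opA: "lin opA" unfolding lin_def sv_def
proof (intro conjI allI ext)
  fix x y :: V and j :: idx
  obtain r s t u v where j: "j = (r,s,t,u,v)" by (cases j) auto
  show "opA (x + y) j = (opA x + opA y) j"
    unfolding j by (simp add: opA_def algebra_simps split: nat.split)
next
  fix c and x :: V and j :: idx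
  obtain r s t u v where j: "j = (r,s,t,u,v)" by (cases j) auto
  show "opA (\<lambda>j. c * x j) j = c * opA x j"
    unfolding j by (simp add: opA_def algebra_simps split: nat.split)
qed
lemma lin_opB: "lin opB" unfolding lin_def sv_def
proof (intro conjI allI ext)
  fix x y :: V and j :: idx
  obtain r s t u v where j: "j = (r,s,t,u,v)" by (cases j) auto
  show "opB (x + y) j = (opB x + opB y) j"
    unfolding j by (simp add: opB_def algebra_simps split: nat.split)
next
  fix c and x :: V and j :: idx
  obtain r s t u v where j: "j = (r,s,t,u,v)" by (cases j) auto
  show "opB (\<lambda>j. c * x j) j = c * opB x j"
    unfolding j by (simp add: opB_def algebra_simps split: nat.split)
qed
lemma lin_opQ: "lin opQ" unfolding lin_def sv_def
proof (intro conjI allI ext)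
  fix x y :: V and j :: idx
  obtain r s t u v where j: "j = (r,s,t,u,v)" by (cases j) auto
  show "opQ (x + y) j = (opQ x + opQ y) j"
    unfolding j by (simp add: opQ_def algebra_simps split: nat.split)
next
  fix c and x :: V and j :: idx
  obtain r s t u v where j: "j = (r,s,t,u,v)" by (cases j) auto
  show "opQ (\<lambda>j. c * x j) j = c * opQ x j"
    unfolding j by (simp add: opQ_def algebra_simps split: nat.split)
qed
lemma lin_opAs: "lin opAs" unfolding lin_def sv_def
proof (intro conjI allI ext)
  fix x y :: V and j :: idx
  obtain r s t u v where j: "j = (r,s,t,u,v)" by (cases j) auto
  show "opAs (x + y) j = (opAs x + opAs y) j"
    unfolding j by (simp add: opAs_def algebra_simps split: nat.split)
next
  fix c and x :: V and j :: idx
  obtain r s t u v where j: "j = (r,s,t,u,v)" by (cases j) auto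
  show "opAs (\<lambda>j. c * x j) j = c * opAs x j"
    unfolding j by (simp add: opAs_def algebra_simps split: nat.split)
qed
lemma lin_opBs: "lin opBs" unfolding lin_def sv_def
proof (intro conjI allI ext)
  fix x y :: V and j :: idx
  obtain r s t u v where j: "j = (r,s,t,u,v)" by (cases j) auto
  show "opBs (x + y) j = (opBs x + opBs y) j"
    unfolding j by (simp add: opBs_def algebra_simps split: nat.split)
next
  fix c and x :: V and j :: idx
  obtain r s t u v where j: "j = (r,s,t,u,v)" by (cases j) auto
  show "opBs (\<lambda>j. c * x j) j = c * opBs x j"
    unfolding j by (simp add: opBs_def algebra_simps split: nat.split)
qed

fun rho :: "gen \<Rightarrow> V \<Rightarrow> V" where
  "rho X1 = opA" | "rho X1s = opAs" | "rho X2 = opB" | "rho X2s = opBs"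
| "rho Qg = (\<lambda>x. opQ x + opA (opAs x) + opB (opBs x))"

fun rhow :: "gen list \<Rightarrow> V \<Rightarrow> V" where
  "rhow [] x = x" | "rhow (g # l) x = rho g (rhow l x)"

lemma lin_rho: "lin (rho g)"
proof (cases g)
  case Qg
  have "lin (\<lambda>x. opQ x + opA (opAs x))" by (rule lin_plus[OF lin_opQ lin_comp[OF lin_opA lin_opAs]])
  then have "lin (\<lambda>x. opQ x + opA (opAs x) + opB (opBs x))" by (rule lin_plus[OF _ lin_comp[OF lin_opB lin_opBs]])
  then show ?thesis using Qg by simp
qed (simp_all add: lin_opA lin_opB lin_opQ lin_opAs lin_opBs)

lemma lin_rhow: "lin (rhow l)"
proof (induction l)
  case Nil then show ?case by (simp add: lin_id)
next
  case (Cons g l)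
  have "rhow (g # l) = (\<lambda>x. rho g (rhow l x))" by (rule ext) simp
  then show ?case using lin_comp[OF lin_rho Cons.IH] by simp
qed

lemma rhow_append: "rhow (l @ m) x = rhow l (rhow m x)"
  by (induction l) auto

definition Phi :: "P \<Rightarrow> V \<Rightarrow> V" where
  "Phi a x = (\<lambda>j. \<Sum>l\<in>Poly_Mapping.keys a. lk a l * rhow l x j)"

lemma Phi_super: "finite S \<Longrightarrow> Poly_Mapping.keys a \<subseteq> S \<Longrightarrow> Phi a x = (\<lambda>j. \<Sum>l\<in>S. lk a l * rhow l x j)"
  unfolding Phi_def
  by (rule ext, rule sum.mono_neutral_left) (auto simp: in_keys_iff)

lemma Phi_add: "Phi (a + b) x = Phi a x + Phi b x"
proof -
  have f: "finite (Poly_Mapping.keys a \<union> Poly_Mapping.keys b)" by simp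
  have "Poly_Mapping.keys (a + b) \<subseteq> Poly_Mapping.keys a \<union> Poly_Mapping.keys b" by (auto simp: in_keys_iff lookup_add)
  then show ?thesis
    by (simp add: Phi_super[OF f] Phi_super[OF f, of a] Phi_super[OF f, of b] fun_eq_iff
        lookup_add distrib_right sum.distrib)
qed

lemma Phi_diff: "Phi (a - b) x = Phi a x - Phi b x"
proof -
  have f: "finite (Poly_Mapping.keys a \<union> Poly_Mapping.keys b)" by simp
  have "Poly_Mapping.keys (a - b) \<subseteq> Poly_Mapping.keys a \<union> Poly_Mapping.keys b" by (auto simp: in_keys_iff lookup_minus)
  then show ?thesis
    by (simp add: Phi_super[OF f] Phi_super[OF f, of a] Phi_super[OF f, of b] fun_eq_iff
        lookup_minus left_diff_distrib sum_subtractf)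
qed

lemma Phi_zero: "Phi 0 x = 0" by (simp add: Phi_def fun_eq_iff)

lemma Phi_single: "Phi (Poly_Mapping.single l c) x = sv c (rhow l x)"
  by (simp add: Phi_super[of "{l}"] sv_def fun_eq_iff)

lemma Phi_at0: "Phi a 0 = 0"
  by (simp add: Phi_def fun_eq_iff lin_zero[OF lin_rhow])

lemma sv_add: "sv c (x + y) = sv c x + sv c y" by (simp add: sv_def fun_eq_iff algebra_simps)
lemma sv_sv: "sv c (sv d x) = sv (c * d) x" by (simp add: sv_def fun_eq_iff)

lemma Phi_single_mult: "Phi (Poly_Mapping.single l c * b) x = sv c (rhow l (Phi b x))"
proof (induction b rule: pm_induct)
  case 1 then show ?case by (simp only: mult_zero_right Phi_zero lin_zero[OF lin_rhow]) (simp add: sv_def fun_eq_iff)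
next
  case (2 b m d)
  have "Phi (Poly_Mapping.single l c * (b + Poly_Mapping.single m d)) x
      = sv c (rhow l (Phi b x)) + sv (c * d) (rhow (l @ m) x)"
    by (simp add: distrib_left Phi_add 2 single_mult_list Phi_single)
  also have "\<dots> = sv c (rhow l (Phi (b + Poly_Mapping.single m d) x))"
    by (simp add: Phi_add Phi_single lin_add[OF lin_rhow] lin_sv[OF lin_rhow] rhow_append sv_add sv_sv)
  finally show ?case .
qed

lemma Phi_mult: "Phi (a * b) x = Phi a (Phi b x)"
proof (induction a rule: pm_induct)
  case 1 then show ?case by (simp add: Phi_zero)
next
  case (2 a l c)
  then show ?case by (simp add: distrib_right Phi_add Phi_single_mult Phi_single)
qed

lemma Phi_gn: "Phi (gn g) x = rho g x"
  by (simp add: gn_def Phi_single sv_def)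
lemma Phi_sc: "Phi (sc c * a) x = sv c (Phi a x)"
  by (simp add: sc_def Phi_single_mult)
lemma Phi_sc1: "Phi (sc c) x = sv c x"
  by (simp add: sc_def Phi_single)

lemma Phi_one: "Phi 1 x = x"
proof -
  have e: "(1::P) = Poly_Mapping.single [] 1" by (metis single_one zero_list_def)
  show ?thesis by (simp only: e Phi_single) (simp add: sv_def)
qed
lemma Phi_Qp: "Phi Qp x = opQ x"
  by (simp add: Qp_def Phi_diff Phi_mult Phi_gn)

definition "Ker = {a. \<forall>x. Phi a x = 0}"

lemma Ker_ideal: "is_ideal Ker"
  unfolding is_ideal_def Ker_def by (simp add: Phi_zero Phi_add Phi_mult Phi_at0)

end

lemma D_Ker: assumes q: "q \<noteq> 0" shows "Dset q \<subseteq> ops.Ker (complex_of_real q)"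
proof -
  interpret ops "complex_of_real q" using q by unfold_locales simp
  show ?thesis unfolding Dset_def Ker_def
    by (auto simp: d_defs p2_def p2s_def Phi_diff Phi_mult Phi_gn Phi_sc Phi_Qp Phi_add Phi_sc1 fun_eq_iff sv_def
        id1 id2 id3 id4 id5 id6 id7a id7b id7c id7d algebra_simps)
qed

definition ev :: "idx \<Rightarrow> V" where "ev k = (\<lambda>j. if j = k then 1 else 0)"
definition Mk :: "idx \<Rightarrow> P" where "Mk k = (case k of (r,s,t,u,v) \<Rightarrow> M r s t u v)"

context ops
begin

lemma ev_Q: "opQ (ev (0,0,0,0,v)) = ev (0,0,0,0,Suc v)"
proof (rule ext)
  fix j :: idx obtain r s t u v' where j: "j = (r,s,t,u,v')" by (cases j) auto
  show "opQ (ev (0,0,0,0,v)) j = ev (0,0,0,0,Suc v) j" unfolding j by (simp add: opQ_def ev_def split: nat.split)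
qed
lemma ev_As: "opAs (ev (0,0,0,u,v)) = ev (0,0,0,Suc u,v)"
proof (rule ext)
  fix j :: idx obtain r s t u' v' where j: "j = (r,s,t,u',v')" by (cases j) auto
  show "opAs (ev (0,0,0,u,v)) j = ev (0,0,0,Suc u,v) j" unfolding j by (simp add: opAs_def ev_def split: nat.split)
qed
lemma ev_Bs: "opBs (ev (0,0,t,u,v)) = ev (0,0,Suc t,u,v)"
proof (rule ext)
  fix j :: idx obtain r s t' u' v' where j: "j = (r,s,t',u',v')" by (cases j) auto
  show "opBs (ev (0,0,t,u,v)) j = ev (0,0,Suc t,u,v) j" unfolding j by (simp add: opBs_def ev_def split: nat.split)
qed
lemma ev_B: "opB (ev (0,s,t,u,v)) = ev (0,Suc s,t,u,v)"
proof (rule ext)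
  fix j :: idx obtain r s' t' u' v' where j: "j = (r,s',t',u',v')" by (cases j) auto
  show "opB (ev (0,s,t,u,v)) j = ev (0,Suc s,t,u,v) j" unfolding j by (simp add: opB_def ev_def split: nat.split)
qed
lemma ev_A: "opA (ev (r,s,t,u,v)) = ev (Suc r,s,t,u,v)"
proof (rule ext)
  fix j :: idx obtain r' s' t' u' v' where j: "j = (r',s',t',u',v')" by (cases j) auto
  show "opA (ev (r,s,t,u,v)) j = ev (Suc r,s,t,u,v) j" unfolding j by (simp add: opA_def ev_def split: nat.split)
qed

lemma Phi_L3: "Phi (L3 u v) (ev (0,0,0,0,0)) = ev (0,0,0,u,v)"
proof (induction u)
  case 0
  show ?case unfolding L3_def
  proof (induction v)
    case 0 then show ?case by (simp add: Phi_one)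
  next
    case (Suc v)
    then show ?case by (simp add: Phi_mult Phi_Qp ev_Q)
  qed
next
  case (Suc u)
  then show ?case by (simp add: L3_def mult.assoc Phi_mult Phi_gn ev_As)
qed

lemma Phi_L2: "Phi (L2 t u v) (ev (0,0,0,0,0)) = ev (0,0,t,u,v)"
  by (induction t) (simp_all add: L2_def mult.assoc Phi_mult Phi_gn ev_Bs Phi_L3 Phi_one)
lemma Phi_L1: "Phi (L1 s t u v) (ev (0,0,0,0,0)) = ev (0,s,t,u,v)"
  by (induction s) (simp_all add: L1_def mult.assoc Phi_mult Phi_gn ev_B Phi_L2 Phi_one)
lemma Phi_M: "Phi (M r s t u v) (ev (0,0,0,0,0)) = ev (r,s,t,u,v)"
  by (induction r) (simp_all add: M_def mult.assoc Phi_mult Phi_gn ev_A Phi_L1 Phi_one)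

lemma Phi_sum: "finite S \<Longrightarrow> Phi (\<Sum>k\<in>S. f k) x = (\<Sum>k\<in>S. Phi (f k) x)"
  by (induction S rule: finite_induct) (simp_all add: Phi_zero Phi_add)

end

lemma gn_pow: "gn g ^ n = Poly_Mapping.single (replicate n g) 1"
proof (induction n)
  case 0 then show ?case by (metis power_0 replicate_0 single_one zero_list_def)
next
  case (Suc n) then show ?case by (simp add: gn_def single_mult_list)
qed

lemma lk_one: "lk (1::P) = wd []"
  by (metis fscale_one lookup_single_wd single_one zero_list_def)

lemma lk_Qp: "lk Qp = Qprime"
  by (simp add: Qp_def Qprime_def lk_diff lk_gn lk_gn2)

lemma lk_Qp_pow: "lk (Qp ^ v) = fpow Qprime v"
proof (induction v)
  case 0 then show ?case by (simp add: fpow_def lk_one)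
next
  case (Suc v) then show ?case by (simp add: lookup_mult_fmul lk_Qp fpow_def)
qed

lemma lk_M: "lk (M r s t u v) = monomial (r,s,t,u,v)"
proof -
  have "M r s t u v = Poly_Mapping.single (replicate r X1 @ replicate s X2 @ replicate t X2s @ replicate u X1s) 1 * Qp ^ v"
    by (simp add: M_def L1_def L2_def L3_def gn_pow mult.assoc[symmetric] single_mult_list)
  then show ?thesis
    by (simp add: monomial_def lookup_mult_fmul lookup_single_wd fscale_one lk_Qp_pow)
qed

lemma lk_Mk: "lk (Mk k) = monomial k"
  by (cases k) (simp add: Mk_def lk_M)

lemma lk_sum: "finite S \<Longrightarrow> lk (\<Sum>k\<in>S. f k) = (\<Sum>k\<in>S. lk (f k))"
  by (induction S rule: finite_induct) (simp_all add: lk_add)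

lemma spn_sum: "y \<in> spn \<Longrightarrow> \<exists>S c. finite S \<and> y = (\<Sum>k\<in>S. sc (c k) * Mk k)"
proof (induction y rule: spn.induct)
  case zero then show ?case by (intro exI[of _ "{}"]) simp
next
  case (step y d r s t u v)
  obtain S c where Sc: "finite S" "y = (\<Sum>k\<in>S. sc (c k) * Mk k)" using step.IH by blast
  define k0 where "k0 = (r,s,t,u,v)"
  define c' where "c' k = (if k \<in> S then c k else 0) + (if k = k0 then d else 0)" for k
  have "(\<Sum>k\<in>insert k0 S. sc (c' k) * Mk k)
      = (\<Sum>k\<in>insert k0 S. (if k \<in> S then sc (c k) * Mk k else 0)) + (\<Sum>k\<in>insert k0 S. (if k = k0 then sc d * Mk k else 0))"
  proof -
    have "sc (c' k) * Mk k = (if k \<in> S then sc (c k) * Mk k else 0) + (if k = k0 then sc d * Mk k else 0)" for k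
      by (simp add: c'_def sc_add[symmetric] distrib_right sc_zero)
    then show ?thesis by (simp add: sum.distrib)
  qed
  also have "(\<Sum>k\<in>insert k0 S. (if k \<in> S then sc (c k) * Mk k else 0)) = (\<Sum>k\<in>S. sc (c k) * Mk k)"
  proof -
    have "insert k0 S \<inter> S = S" by blast
    then show ?thesis using Sc(1) by (simp add: sum.If_cases)
  qed
  also have "(\<Sum>k\<in>insert k0 S. (if k = k0 then sc d * Mk k else 0)) = sc d * M r s t u v"
    using Sc(1) by (simp add: sum.delta' Mk_def k0_def)
  finally have "y + sc d * M r s t u v = (\<Sum>k\<in>insert k0 S. sc (c' k) * Mk k)" using Sc(2) by simp
  then show ?case using Sc(1) by blast
qed

theorem lemma3p5p5:
  fixes q :: real
  assumes "0 < q" and "q < 1"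
  shows "(\<forall>f :: elt. finite {w. f w \<noteq> 0} \<longrightarrow>
            (\<exists>S c. finite S \<and>
               f - (\<Sum>k\<in>S. fscale (c k) (monomial k)) \<in> gen_ideal (rels q)))
       \<and> (\<forall>S c. finite S \<longrightarrow>
            (\<Sum>k\<in>S. fscale (c k) (monomial k)) \<in> gen_ideal (rels q) \<longrightarrow>
            (\<forall>k\<in>S. c k = 0))"
proof -
  have q0: "q \<noteq> 0" using assms by simp
  have lk_comb: "finite S \<Longrightarrow> lk (\<Sum>k\<in>S. sc (c k) * Mk k) = (\<Sum>k\<in>S. fscale (c k) (monomial k))" for S c
    by (simp add: lk_sum lookup_sc_mult lk_Mk)
  interpret J: idl "Jp (RP q)" by unfold_locales (rule Jp_ideal)
  have DJ: "Dset q \<subseteq> Jp (RP q)" using J.RP_to_D[OF q0] Jp_base by blast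
  interpret JR: rel "Jp (RP q)" q by unfold_locales (simp_all add: q0 DJ)
  have part1: "\<exists>S c. finite S \<and> f - (\<Sum>k\<in>S. fscale (c k) (monomial k)) \<in> gen_ideal (rels q)"
    if f: "finite {w. f w \<noteq> 0}" for f :: elt
  proof -
    define x where "x = Abs_poly_mapping f"
    have lx: "lk x = f" using f by (simp add: x_def Abs_poly_mapping_inverse)
    obtain y where y: "y \<in> spn" "cg (Jp (RP q)) x y" using JR.SP_all[of x] unfolding JR.SP_def by blast
    obtain S c where Sc: "finite S" "y = (\<Sum>k\<in>S. sc (c k) * Mk k)" using spn_sum[OF y(1)] by blast
    have "lk (x - y) \<in> gen_ideal (rels q)" using Jp_to_gen y(2) by (simp add: cg_def)
    then have "f - (\<Sum>k\<in>S. fscale (c k) (monomial k)) \<in> gen_ideal (rels q)"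
      by (simp add: lk_diff lx Sc lk_comb)
    then show ?thesis using Sc(1) by blast
  qed
  have part2: "\<forall>k\<in>S. c k = 0"
    if S: "finite S" and mem: "(\<Sum>k\<in>S. fscale (c k) (monomial k)) \<in> gen_ideal (rels q)" for S c
  proof -
    interpret O: ops "complex_of_real q" using q0 by unfold_locales simp
    interpret K: idl O.Ker by unfold_locales (rule O.Ker_ideal)
    have RK: "RP q \<subseteq> O.Ker" using K.D_to_RP[OF q0 D_Ker[OF q0]] .
    have JK: "Jp (RP q) \<subseteq> O.Ker" by (rule Jp_sub[OF O.Ker_ideal RK])
    obtain x where x: "x \<in> Jp (RP q)" "lk x = (\<Sum>k\<in>S. fscale (c k) (monomial k))"
      using gen_to_Jp[OF mem] by blast
    have "lk x = lk (\<Sum>k\<in>S. sc (c k) * Mk k)" by (simp only: x(2) lk_comb[OF S])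
    then have xe: "x = (\<Sum>k\<in>S. sc (c k) * Mk k)" by (rule lk_inj)
    have "x \<in> O.Ker" using JK x(1) by blast
    then have "O.Phi x (ev (0,0,0,0,0)) = 0" unfolding O.Ker_def by blast
    moreover have "O.Phi x (ev (0,0,0,0,0)) = (\<Sum>k\<in>S. sv (c k) (ev k))"
    proof -
      have pm: "O.Phi (Mk k) (ev (0,0,0,0,0)) = ev k" for k
        by (cases k) (simp add: Mk_def O.Phi_M)
      show ?thesis unfolding xe O.Phi_sum[OF S] O.Phi_sc pm ..
    qed
    ultimately have z: "(\<Sum>k\<in>S. sv (c k) (ev k)) = 0" by simp
    show ?thesis
    proof
      fix k0 assume k0: "k0 \<in> S"
      have "(\<Sum>k\<in>S. sv (c k) (ev k)) k0 = (\<Sum>k\<in>S. c k * (if k0 = k then 1 else 0))"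
        by (induction S rule: infinite_finite_induct) (simp_all add: sv_def ev_def)
      also have "\<dots> = (\<Sum>k\<in>S. if k0 = k then c k else 0)" by (rule sum.cong) auto
      also have "\<dots> = c k0" using S k0 by simp
      finally show "c k0 = 0" using z by simp
    qed
  qed
  show ?thesis using part1 part2 by blast
qed

end
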